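(* Consider a single bidder with a constrained additive valuation over $m$ items, whose type $t=(t_1,\dots,t_m)\in\mathbb R_{\ge0}^m$ is drawn either from $\mathcal D=\times_{j\in[m]}\mathcal D_j$ or from $\hat{\mathcal D}=\times_{j\in[m]}\hat{\mathcal D}_j$, with $\|\mathcal D_j-\hat{\mathcal D}_j\|_K\le\xi$ for every $j$. Fix any set $S\subseteq[m]$ of available items, any prices $\{p_j\}_{j\in[m]}$ and any entry fee $\delta(S)$. The bidder pays the entry fee and buys her favorite set $S^*\in\arg\max_{S'\subseteq S}v(t,S')-\sum_{j\in S'}p_j$ if its utility is at least $\delta(S)$, and otherwise buys nothing. Let $\mathcal L$ and $\hat{\mathcal L}$ be the distributions of the set of items purchased from $S$ when $t\sim\mathcal D$ and $t\sim\hat{\mathcal D}$ respectively. Then $\|\mathcal L-\hat{\mathcal L}\|_{TV}\le2m\xi$.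
   Context: A constrained additive valuation: $t_j$ is the value of item $j$ and $v(t,S)=\max_{R\subseteq S,R\in\mathcal I}\sum_{j\in R}t_j$ for some downward-closed $\mathcal I\subseteq2^{[m]}$. Kolmogorov distance: $\|P-Q\|_K=\sup_x|\Pr_P[X\le x]-\Pr_Q[X\le x]|$. Total variation distance: $\|P-Q\|_{TV}=\sup_E|P(E)-Q(E)|$. *)

theory Defs
  imports "HOL-Probability.Probability"
begin

text \<open>Items are 0,...,m-1. A type is a function t :: nat => real (t j = value of item j).\<close>

definition cadd_val :: "nat set set \<Rightarrow> (nat \<Rightarrow> real) \<Rightarrow> nat set \<Rightarrow> real" where
  "cadd_val I t S = Max ((\<lambda>R. \<Sum>j\<in>R. t j) ` {R. R \<subseteq> S \<and> R \<in> I})"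

definition downward_closed :: "nat set set \<Rightarrow> bool" where
  "downward_closed I \<longleftrightarrow> (\<forall>A\<in>I. \<forall>B. B \<subseteq> A \<longrightarrow> B \<in> I)"

definition util :: "nat set set \<Rightarrow> (nat \<Rightarrow> real) \<Rightarrow> (nat \<Rightarrow> real) \<Rightarrow> nat set \<Rightarrow> real" where
  "util I p t S' = cadd_val I t S' - (\<Sum>j\<in>S'. p j)"

text \<open>The favourite set is an element of the argmax; ties are broken by a fixed priority
  (the maximiser with the least priority index).\<close>
definition purchased ::
  "nat set set \<Rightarrow> (nat set \<Rightarrow> nat) \<Rightarrow> nat set \<Rightarrow> (nat \<Rightarrow> real) \<Rightarrow> real \<Rightarrow> (nat \<Rightarrow> real) \<Rightarrow> nat set" where
  "purchased I prio S p delta t =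
     (let M = Max (util I p t ` Pow S);
          Sstar = (ARG_MIN prio A. A \<subseteq> S \<and> util I p t A = M)
      in if M \<ge> delta then Sstar else {})"

definition kolmogorov_dist :: "real measure \<Rightarrow> real measure \<Rightarrow> real" where
  "kolmogorov_dist P Q = (SUP x. \<bar>measure P {..x} - measure Q {..x}\<bar>)"

definition tv_dist :: "'a measure \<Rightarrow> 'a measure \<Rightarrow> real" where
  "tv_dist P Q = (SUP E \<in> sets P. \<bar>measure P E - measure Q E\<bar>)"

end

theory Submission
  imports Defs
begin


lemma maxset_struct:
  fixes F :: "'a set" and f :: "'a \<Rightarrow> real \<Rightarrow> real" and K :: "'a set"
  assumes fin: "finite F" and ne: "F \<noteq> {}"
    and fK: "\<And>A y. A \<in> F \<Longrightarrow> A \<in> K \<Longrightarrow> f A y = max (c A) (a A + y)"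
    and fnK: "\<And>A y. A \<in> F \<Longrightarrow> A \<notin> K \<Longrightarrow> f A y = c A"
  shows "\<exists>x0 W1 W2. W1 \<noteq> {} \<and> W2 \<noteq> {} \<and> W1 \<subseteq> F \<and> W2 \<subseteq> F \<and>
     (\<forall>y<x0. {A\<in>F. f A y = Max ((\<lambda>B. f B y) ` F)} = W1) \<and>
     (\<forall>y>x0. {A\<in>F. f A y = Max ((\<lambda>B. f B y) ` F)} = W2) \<and>
     {A\<in>F. f A x0 = Max ((\<lambda>B. f B x0) ` F)} = W1 \<union> W2"
proof (cases "F \<inter> K = {}")
  case True
  then have fc: "\<And>A y. A \<in> F \<Longrightarrow> f A y = c A" using fnK by blast
  define W where "W = {A\<in>F. c A = Max (c ` F)}"
  have "\<And>y. {A\<in>F. f A y = Max ((\<lambda>B. f B y) ` F)} = W"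
  proof -
    fix y
    have "(\<lambda>B. f B y) ` F = c ` F" using fc by (auto simp: image_def)
    then show "{A\<in>F. f A y = Max ((\<lambda>B. f B y) ` F)} = W" using fc unfolding W_def by auto
  qed
  moreover have "W \<noteq> {}"
  proof -
    have "Max (c ` F) \<in> c ` F" using fin ne by simp
    then show ?thesis unfolding W_def by auto
  qed
  ultimately show ?thesis unfolding W_def by blast
next
  case False
  define C where "C = Max (c ` F)"
  define b where "b = Max (a ` (F \<inter> K))"
  have finK: "finite (F \<inter> K)" using fin by simp
  have cle: "\<And>A. A \<in> F \<Longrightarrow> c A \<le> C" unfolding C_def using fin by simp
  have ale: "\<And>A. A \<in> F \<Longrightarrow> A \<in> K \<Longrightarrow> a A \<le> b" unfolding b_def using finK by simp
  obtain A1 where A1: "A1 \<in> F" "c A1 = C"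
  proof -
    have "Max (c ` F) \<in> c ` F" using fin ne by simp
    then show ?thesis using that unfolding C_def by auto
  qed
  obtain A2 where A2: "A2 \<in> F" "A2 \<in> K" "a A2 = b"
  proof -
    have "Max (a ` (F \<inter> K)) \<in> a ` (F \<inter> K)" using finK False by simp
    then show ?thesis using that unfolding b_def by auto
  qed
  define W1 where "W1 = {A\<in>F. c A = C}"
  define W2 where "W2 = {A\<in>F \<inter> K. a A = b}"
  have Mx: "Max ((\<lambda>B. f B y) ` F) = max C (b + y)" for y
  proof (rule antisym)
    show "Max ((\<lambda>B. f B y) ` F) \<le> max C (b + y)"
    proof -
      have "\<forall>A\<in>F. f A y \<le> max C (b + y)"
      proof
        fix A assume "A \<in> F"
        then show "f A y \<le> max C (b + y)"
          using cle[of A] ale[of A] fK[of A y] fnK[of A y] by (cases "A \<in> K") auto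
      qed
      then show ?thesis using fin ne by (simp add: Max_le_iff)
    qed
    have "f A1 y \<ge> C" using A1 fK fnK by (cases "A1 \<in> K") auto
    moreover have "f A2 y \<ge> b + y" using A2 fK by auto
    moreover have "f A1 y \<le> Max ((\<lambda>B. f B y) ` F)" "f A2 y \<le> Max ((\<lambda>B. f B y) ` F)"
      using fin A1 A2 by auto
    ultimately show "max C (b + y) \<le> Max ((\<lambda>B. f B y) ` F)" by linarith
  qed

  have e1: "f A y = max C (b + y) \<longleftrightarrow> A \<in> W1" if "A \<in> F" "y < C - b" for A y
  proof (cases "A \<in> K")
    case True
    have "a A + y < C" using ale[OF that(1) True] that(2) by linarith
    then show ?thesis using fK[OF that(1) True, of y] cle[OF that(1)] that unfolding W1_def
      by (auto simp: max_def)
  next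
    case False
    then show ?thesis using fnK[OF that(1) False, of y] cle[OF that(1)] that unfolding W1_def
      by (auto simp: max_def)
  qed
  have e2: "f A y = max C (b + y) \<longleftrightarrow> A \<in> W2" if "A \<in> F" "y > C - b" for A y
  proof (cases "A \<in> K")
    case True
    have "c A < b + y" using cle[OF that(1)] that(2) by linarith
    then show ?thesis using fK[OF that(1) True, of y] ale[OF that(1) True] that True unfolding W2_def
      by (auto simp: max_def)
  next
    case False
    then show ?thesis using fnK[OF that(1) False, of y] cle[OF that(1)] that unfolding W2_def
      by (auto simp: max_def)
  qed
  have e3: "f A (C-b) = max C (b + (C-b)) \<longleftrightarrow> A \<in> W1 \<union> W2" if "A \<in> F" for A
  proof (cases "A \<in> K")
    case True
    then show ?thesis using fK[OF that(1) True, of "C-b"] ale[OF that(1) True] cle[OF that(1)] that True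
      unfolding W1_def W2_def by (auto simp: max_def)
  next
    case False
    then show ?thesis using fnK[OF that(1) False, of "C-b"] cle[OF that(1)] that unfolding W1_def W2_def
      by (auto simp: max_def)
  qed
  have "\<forall>y<C - b. {A\<in>F. f A y = Max ((\<lambda>B. f B y) ` F)} = W1"
    using e1 unfolding Mx by (auto simp: W1_def)
  moreover have "\<forall>y>C - b. {A\<in>F. f A y = Max ((\<lambda>B. f B y) ` F)} = W2"
    using e2 unfolding Mx by (auto simp: W2_def)
  moreover have "{A\<in>F. f A (C-b) = Max ((\<lambda>B. f B (C-b)) ` F)} = W1 \<union> W2"
    using e3 unfolding Mx by (auto simp: W1_def W2_def)
  moreover have "W1 \<noteq> {}" "W2 \<noteq> {}" "W1 \<subseteq> F" "W2 \<subseteq> F" using A1 A2 unfolding W1_def W2_def by auto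
  ultimately show ?thesis by blast
qed



lemma util_form:
  fixes x :: "nat \<Rightarrow> real" and k :: nat and A :: "nat set"
  assumes finA: "finite A" and Ie: "{} \<in> I"
  defines "R0 \<equiv> {R. R \<subseteq> A \<and> R \<in> I \<and> k \<notin> R}"
      and "R1 \<equiv> {R. R \<subseteq> A \<and> R \<in> I \<and> k \<in> R}"
  shows "R1 \<noteq> {} \<Longrightarrow> util I p (x(k:=y)) A =
            max (Max ((\<lambda>R. sum x R) ` R0) - sum p A) (Max ((\<lambda>R. sum x (R - {k})) ` R1) - sum p A + y)"
    and "R1 = {} \<Longrightarrow> util I p (x(k:=y)) A = Max ((\<lambda>R. sum x R) ` R0) - sum p A"
proof -
  have fin0: "finite R0" and fin1: "finite R1"
    using finA unfolding R0_def R1_def by (auto intro: finite_subset[of _ "Pow A"])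
  have ne0: "R0 \<noteq> {}" using Ie unfolding R0_def by auto
  have split: "{R. R \<subseteq> A \<and> R \<in> I} = R0 \<union> R1" unfolding R0_def R1_def by auto
  have s0: "sum (x(k:=y)) R = sum x R" if "R \<in> R0" for R
    using that unfolding R0_def by (intro sum.cong) auto
  have s1: "sum (x(k:=y)) R = sum x (R - {k}) + y" if "R \<in> R1" for R
  proof -
    have "finite R" using that finA unfolding R1_def by (auto intro: finite_subset)
    moreover have "k \<in> R" using that unfolding R1_def by auto
    ultimately have "sum (x(k:=y)) R = (x(k:=y)) k + sum (x(k:=y)) (R - {k})"
      by (simp add: sum.remove)
    also have "sum (x(k:=y)) (R - {k}) = sum x (R - {k})" by (intro sum.cong) auto
    finally show ?thesis by simp
  qed
  have i0: "(\<lambda>R. sum (x(k:=y)) R) ` R0 = (\<lambda>R. sum x R) ` R0"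
    using s0 by (auto simp: image_def)
  have i1: "(\<lambda>R. sum (x(k:=y)) R) ` R1 = (\<lambda>R. sum x (R - {k}) + y) ` R1"
    using s1 by (auto simp: image_def)
  have cv: "cadd_val I (x(k:=y)) A = Max ((\<lambda>R. sum (x(k:=y)) R) ` R0 \<union> (\<lambda>R. sum (x(k:=y)) R) ` R1)"
    unfolding cadd_val_def split image_Un by simp
  show "R1 \<noteq> {} \<Longrightarrow> util I p (x(k:=y)) A =
            max (Max ((\<lambda>R. sum x R) ` R0) - sum p A) (Max ((\<lambda>R. sum x (R - {k})) ` R1) - sum p A + y)"
  proof -
    assume ne1: "R1 \<noteq> {}"
    have "cadd_val I (x(k:=y)) A = max (Max ((\<lambda>R. sum x R) ` R0)) (Max ((\<lambda>R. sum x (R - {k})) ` R1) + y)"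
      unfolding cv i0 i1 using fin0 fin1 ne0 ne1
      by (simp add: Max_Un Max_add_commute)
    then show ?thesis unfolding util_def by (simp add: max_diff_distrib_left)
  qed
  show "R1 = {} \<Longrightarrow> util I p (x(k:=y)) A = Max ((\<lambda>R. sum x R) ` R0) - sum p A"
    unfolding util_def cv i0 by simp
qed

lemma argmin_union:
  fixes prio :: "'a \<Rightarrow> nat"
  assumes inj: "inj_on prio F" and "W1 \<noteq> {}" "W2 \<noteq> {}" "W1 \<subseteq> F" "W2 \<subseteq> F"
  shows "(ARG_MIN prio A. A \<in> W1 \<union> W2) = (ARG_MIN prio A. A \<in> W1) \<or>
         (ARG_MIN prio A. A \<in> W1 \<union> W2) = (ARG_MIN prio A. A \<in> W2)"
proof -
  obtain w1 where w1: "w1 \<in> W1" using assms by auto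
  obtain w2 where w2: "w2 \<in> W2" using assms by auto
  let ?a = "ARG_MIN prio A. A \<in> W1 \<union> W2"
  let ?a1 = "ARG_MIN prio A. A \<in> W1"
  let ?a2 = "ARG_MIN prio A. A \<in> W2"
  have a: "?a \<in> W1 \<union> W2" "\<And>B. B \<in> W1 \<union> W2 \<Longrightarrow> prio ?a \<le> prio B"
    using arg_min_nat_lemma[of "\<lambda>A. A \<in> W1 \<union> W2" w1 prio] w1 by auto
  have a1: "?a1 \<in> W1" "\<And>B. B \<in> W1 \<Longrightarrow> prio ?a1 \<le> prio B"
    using arg_min_nat_lemma[of "\<lambda>A. A \<in> W1" w1 prio] w1 by auto
  have a2: "?a2 \<in> W2" "\<And>B. B \<in> W2 \<Longrightarrow> prio ?a2 \<le> prio B"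
    using arg_min_nat_lemma[of "\<lambda>A. A \<in> W2" w2 prio] w2 by auto
  show ?thesis
  proof (cases "?a \<in> W1")
    case True
    then have "prio ?a = prio ?a1" using a a1 by (meson UnI1 le_antisym)
    then have "?a = ?a1" using inj a(1) a1(1) assms(4,5) by (auto dest: inj_onD)
    then show ?thesis by simp
  next
    case False
    then have "?a \<in> W2" using a by auto
    then have "prio ?a = prio ?a2" using a a2 by (meson UnI2 le_antisym)
    then have "?a = ?a2" using inj a(1) a2(1) assms(4,5) by (auto dest: inj_onD)
    then show ?thesis by simp
  qed
qed



definition downset :: "real set \<Rightarrow> bool" where
  "downset L \<longleftrightarrow> (\<forall>u\<in>L. \<forall>v\<le>u. v \<in> L)"

lemma phi_struct:
  fixes x :: "nat \<Rightarrow> real" and k :: nat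
  assumes finS: "finite S" and Ie: "{} \<in> I" and inj: "inj_on prio (Pow S)"
  shows "\<exists>L1 L2 z0 z1 z2. downset L1 \<and> downset L2 \<and> L1 \<subseteq> L2 \<and>
     (\<forall>y\<in>L1. purchased I prio S p \<delta> (x(k:=y)) = z0) \<and>
     (\<forall>y\<in>L2 - L1. purchased I prio S p \<delta> (x(k:=y)) = z1) \<and>
     (\<forall>y. y \<notin> L2 \<longrightarrow> purchased I prio S p \<delta> (x(k:=y)) = z2)"
proof -
  define f where "f = (\<lambda>A y. util I p (x(k:=y)) A)"
  define R0 where "R0 = (\<lambda>A. {R. R \<subseteq> A \<and> R \<in> I \<and> k \<notin> R})"
  define R1 where "R1 = (\<lambda>A. {R. R \<subseteq> A \<and> R \<in> I \<and> k \<in> R})"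
  define c where "c = (\<lambda>A. Max ((\<lambda>R. sum x R) ` R0 A) - sum p A)"
  define a where "a = (\<lambda>A. Max ((\<lambda>R. sum x (R - {k})) ` R1 A) - sum p A)"
  define K where "K = {A. R1 A \<noteq> {}}"
  have finA: "\<And>A. A \<in> Pow S \<Longrightarrow> finite A" using finS by (auto intro: finite_subset)
  have fK: "f A y = max (c A) (a A + y)" if A: "A \<in> Pow S" and AK: "A \<in> K" for A y
  proof -
    have ne: "{R. R \<subseteq> A \<and> R \<in> I \<and> k \<in> R} \<noteq> {}" using AK unfolding K_def R1_def by simp
    show ?thesis using util_form(1)[OF finA[OF A] Ie ne, of p x y]
      unfolding f_def c_def a_def R0_def R1_def by (simp only:)
  qed
  have fnK: "f A y = c A" if A: "A \<in> Pow S" and AK: "A \<notin> K" for A y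
  proof -
    have ne: "{R. R \<subseteq> A \<and> R \<in> I \<and> k \<in> R} = {}" using AK unfolding K_def R1_def by simp
    show ?thesis using util_form(2)[OF finA[OF A] Ie ne, of p x y]
      unfolding f_def c_def a_def R0_def R1_def by (simp only:)
  qed
  have fmono: "f A u \<le> f A v" if "A \<in> Pow S" "u \<le> v" for A u v
    using that fK[of A] fnK[of A] by (cases "A \<in> K") auto
  define Mx where "Mx = (\<lambda>y. Max ((\<lambda>B. f B y) ` Pow S))"
  define W where "W = (\<lambda>y. {A\<in>Pow S. f A y = Mx y})"
  define g where "g = (\<lambda>W. ARG_MIN prio A. A \<in> W)"
  have finP: "finite (Pow S)" "Pow S \<noteq> {}" using finS by auto
  obtain x0 W1 W2 where st: "W1 \<noteq> {}" "W2 \<noteq> {}" "W1 \<subseteq> Pow S" "W2 \<subseteq> Pow S"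
     "\<forall>y<x0. W y = W1" "\<forall>y>x0. W y = W2" "W x0 = W1 \<union> W2"
  proof -
    have "\<exists>x0 W1 W2. W1 \<noteq> {} \<and> W2 \<noteq> {} \<and> W1 \<subseteq> Pow S \<and> W2 \<subseteq> Pow S \<and>
      (\<forall>y<x0. {A\<in>Pow S. f A y = Max ((\<lambda>B. f B y) ` Pow S)} = W1) \<and>
      (\<forall>y>x0. {A\<in>Pow S. f A y = Max ((\<lambda>B. f B y) ` Pow S)} = W2) \<and>
      {A\<in>Pow S. f A x0 = Max ((\<lambda>B. f B x0) ` Pow S)} = W1 \<union> W2"
      by (rule maxset_struct[where F="Pow S" and f=f and K=K and c=c and a=a])
        (use finP in simp, use finP in simp, erule fK, assumption, erule fnK, assumption)
    then obtain x0 W1 W2 where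
      "W1 \<noteq> {}" "W2 \<noteq> {}" "W1 \<subseteq> Pow S" "W2 \<subseteq> Pow S"
      "\<forall>y<x0. {A\<in>Pow S. f A y = Max ((\<lambda>B. f B y) ` Pow S)} = W1"
      "\<forall>y>x0. {A\<in>Pow S. f A y = Max ((\<lambda>B. f B y) ` Pow S)} = W2"
      "{A\<in>Pow S. f A x0 = Max ((\<lambda>B. f B x0) ` Pow S)} = W1 \<union> W2"
      by (elim exE conjE)
    then show ?thesis using that unfolding W_def Mx_def by (simp only:)
  qed
  have Mmono: "Mx u \<le> Mx v" if "u \<le> v" for u v
  proof -
    have "\<forall>A\<in>Pow S. f A u \<le> Mx v"
    proof
      fix A assume A: "A \<in> Pow S"
      have "f A v \<le> Mx v" unfolding Mx_def using finP A by simp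
      then show "f A u \<le> Mx v" using fmono[OF A that] by linarith
    qed
    then show ?thesis unfolding Mx_def using finP by (simp add: Max_le_iff)
  qed
  have pur: "purchased I prio S p \<delta> (x(k:=y)) = (if \<delta> \<le> Mx y then g (W y) else {})" for y
  proof -
    have e1: "Max (util I p (x(k:=y)) ` Pow S) = Mx y" unfolding Mx_def f_def by simp
    have e2: "(\<lambda>A. A \<subseteq> S \<and> util I p (x(k:=y)) A = Mx y) = (\<lambda>A. A \<in> W y)"
      unfolding W_def f_def by auto
    show ?thesis by (simp only: purchased_def Let_def e1 e2 g_def)
  qed
  define L1 where "L1 = {y. \<not> \<delta> \<le> Mx y}"
  define V where "V = (if g (W x0) = g W1 then {..x0} else {..<x0})"
  define L2 where "L2 = L1 \<union> V"
  have dL1: "downset L1" unfolding downset_def L1_def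
  proof (intro ballI allI impI)
    fix u v assume "u \<in> {y. \<not> \<delta> \<le> Mx y}" "v \<le> u"
    then show "v \<in> {y. \<not> \<delta> \<le> Mx y}" using Mmono[of v u] by simp
  qed
  have dV: "downset V" unfolding downset_def V_def by auto
  have dL2: "downset L2" using dL1 dV unfolding downset_def L2_def by blast
  have gV: "g (W y) = g W1" if "y \<in> V" for y
  proof (cases "y < x0")
    case True then show ?thesis using st by simp
  next
    case False
    then have "y = x0" "g (W x0) = g W1" using that unfolding V_def by (auto split: if_splits)
    then show ?thesis by simp
  qed
  have gnV: "g (W y) = g W2" if "y \<notin> V" for y
  proof (cases "y > x0")
    case True then show ?thesis using st by simp
  next
    case False
    then have "y = x0" "g (W x0) \<noteq> g W1" using that unfolding V_def by (auto split: if_splits)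
    then show ?thesis using argmin_union[OF inj st(1-4)] st(7) unfolding g_def by auto
  qed
  show ?thesis
  proof (intro exI conjI)
    show "downset L1" "downset L2" by fact+
    show "L1 \<subseteq> L2" unfolding L2_def by auto
    show "\<forall>y\<in>L1. purchased I prio S p \<delta> (x(k:=y)) = {}" unfolding pur L1_def by auto
    show "\<forall>y\<in>L2 - L1. purchased I prio S p \<delta> (x(k:=y)) = g W1"
      unfolding pur using gV unfolding L2_def L1_def by auto
    show "\<forall>y. y \<notin> L2 \<longrightarrow> purchased I prio S p \<delta> (x(k:=y)) = g W2"
      unfolding pur using gnV unfolding L2_def L1_def by auto
  qed
qed



lemma downset_cases:
  assumes "downset L"
  shows "L = {} \<or> L = UNIV \<or> (\<exists>a. L = {..a} \<or> L = {..<a})"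
proof (cases "L = {} \<or> L = UNIV")
  case True then show ?thesis by blast
next
  case False
  then obtain w where w: "w \<notin> L" by auto
  obtain l where l: "l \<in> L" using False by auto
  have bdd: "bdd_above L"
  proof
    fix u assume "u \<in> L"
    show "u \<le> w"
    proof (rule ccontr)
      assume "\<not> u \<le> w" then show False using assms w \<open>u \<in> L\<close> unfolding downset_def by auto
    qed
  qed
  define a where "a = Sup L"
  have lt: "v \<in> L" if va: "v < a" for v
  proof -
    have "L \<noteq> {}" using l by auto
    then have "\<exists>u\<in>L. v < u" using less_cSupD[of L v] va unfolding a_def by blast
    then obtain u where "u \<in> L" "v < u" by blast
    then show ?thesis using assms unfolding downset_def by auto
  qed
  have gt: "v \<notin> L" if "v > a" for v
    using cSup_upper[OF _ bdd, of v] that unfolding a_def by auto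
  show ?thesis
  proof (cases "a \<in> L")
    case True
    have "L = {..a}"
    proof (intro set_eqI iffI)
      fix x assume "x \<in> L" then show "x \<in> {..a}" using gt by (meson atMost_iff not_le)
    next
      fix x assume "x \<in> {..a}" then show "x \<in> L" using lt True by (cases "x = a") auto
    qed
    then show ?thesis by blast
  next
    case False
    have "L = {..<a}"
    proof (intro set_eqI iffI)
      fix x assume "x \<in> L" then show "x \<in> {..<a}" using gt False by (metis lessThan_iff linorder_neqE_linordered_idom)
    next
      fix x assume "x \<in> {..<a}" then show "x \<in> L" using lt by auto
    qed
    then show ?thesis by blast
  qed
qed

lemma ray_bound:
  assumes P: "prob_space P" and Q: "prob_space Q"
    and sP: "sets P = sets borel" and sQ: "sets Q = sets borel"
    and kol: "\<And>a. \<bar>measure P {..a} - measure Q {..a}\<bar> \<le> \<xi>"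
    and L: "downset L"
  shows "L \<in> sets borel \<and> \<bar>measure P L - measure Q L\<bar> \<le> \<xi>"
proof -
  interpret P: prob_space P by fact
  interpret Q: prob_space Q by fact
  have xi: "0 \<le> \<xi>" using kol[of 0] by linarith
  have spP: "space P = UNIV" using sets_eq_imp_space_eq[OF sP] by simp
  have spQ: "space Q = UNIV" using sets_eq_imp_space_eq[OF sQ] by simp
  consider "L = {}" | "L = UNIV" | a where "L = {..a}" | a where "L = {..<a}"
    using downset_cases[OF L] by blast
  then show ?thesis
  proof cases
    case 1 then show ?thesis using xi by simp
  next
    case 2 then show ?thesis using xi P.prob_space Q.prob_space spP spQ by simp
  next
    case 3 then show ?thesis using kol by simp
  next
    case (4 a)
    define A where "A = (\<lambda>n::nat. {..a - 1 / real (Suc n)})"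
    have rA: "range A \<subseteq> sets P" "range A \<subseteq> sets Q" unfolding A_def sP sQ by auto
    have incA: "incseq A" unfolding A_def
    proof (intro monoI subsetI)
      fix m n :: nat and x assume "m \<le> n" "x \<in> {..a - 1 / real (Suc m)}"
      moreover have "1 / real (Suc n) \<le> 1 / real (Suc m)" using \<open>m \<le> n\<close> by (simp add: frac_le)
      ultimately show "x \<in> {..a - 1 / real (Suc n)}" by auto
    qed
    have UA: "(\<Union>n. A n) = {..<a}"
    proof
      show "(\<Union>n. A n) \<subseteq> {..<a}" unfolding A_def
      proof (intro subsetI, elim UN_E)
        fix x n assume "x \<in> {..a - 1 / real (Suc n)}"
        then have "x \<le> a - 1 / real (Suc n)" by simp
        moreover have "0 < 1 / real (Suc n)" by simp
        ultimately have "x < a" by linarith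
        then show "x \<in> {..<a}" by simp
      qed
      show "{..<a} \<subseteq> (\<Union>n. A n)"
      proof
        fix x assume "x \<in> {..<a}"
        then have "0 < a - x" by simp
        then obtain n where "1 / real (Suc n) < a - x" using nat_approx_posE by blast
        then have "x \<in> A n" unfolding A_def by simp
        then show "x \<in> (\<Union>n. A n)" by blast
      qed
    qed
    have lim: "(\<lambda>n. \<bar>measure P (A n) - measure Q (A n)\<bar>) \<longlonglongrightarrow> \<bar>measure P {..<a} - measure Q {..<a}\<bar>"
      using P.finite_Lim_measure_incseq[OF rA(1) incA] Q.finite_Lim_measure_incseq[OF rA(2) incA]
      unfolding UA by (intro tendsto_intros)
    have "\<bar>measure P {..<a} - measure Q {..<a}\<bar> \<le> \<xi>"
      by (rule LIMSEQ_le_const2[OF lim]) (auto simp: A_def kol)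
    then show ?thesis using 4 by simp
  qed
qed

lemma piece_bound:
  assumes P: "prob_space P" and Q: "prob_space Q"
    and sP: "sets P = sets borel" and sQ: "sets Q = sets borel"
    and kol: "\<And>a. \<bar>measure P {..a} - measure Q {..a}\<bar> \<le> \<xi>"
    and L1: "downset L1" and L2: "downset L2" and sub: "L1 \<subseteq> L2"
    and p0: "\<forall>y\<in>L1. \<phi> y = z0" and p1: "\<forall>y\<in>L2 - L1. \<phi> y = z1" and p2: "\<forall>y. y \<notin> L2 \<longrightarrow> \<phi> y = z2"
  shows "\<bar>measure P (\<phi> -` E) - measure Q (\<phi> -` E)\<bar> \<le> 2 * \<xi>"
proof -
  interpret P: prob_space P by fact
  interpret Q: prob_space Q by fact
  have spP: "space P = UNIV" using sets_eq_imp_space_eq[OF sP] by simp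
  have spQ: "space Q = UNIV" using sets_eq_imp_space_eq[OF sQ] by simp
  note r1 = ray_bound[OF P Q sP sQ kol L1] and r2 = ray_bound[OF P Q sP sQ kol L2]
  define X0 where "X0 = (if z0 \<in> E then L1 else {})"
  define X1 where "X1 = (if z1 \<in> E then L2 - L1 else {})"
  define X2 where "X2 = (if z2 \<in> E then - L2 else {})"
  have B: "\<phi> -` E = (X0 \<union> X1) \<union> X2"
    unfolding X0_def X1_def X2_def using p0 p1 p2 sub by (auto, metis Diff_iff)
  have sX: "X0 \<in> sets borel" "X1 \<in> sets borel" "X2 \<in> sets borel"
    unfolding X0_def X1_def X2_def using r1 r2 by auto
  have d1: "X0 \<inter> X1 = {}" "(X0 \<union> X1) \<inter> X2 = {}" unfolding X0_def X1_def X2_def using sub by auto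
  have mP: "measure P (\<phi> -` E) = measure P X0 + measure P X1 + measure P X2"
    unfolding B using sX d1 sP by (simp add: P.finite_measure_Union)
  have mQ: "measure Q (\<phi> -` E) = measure Q X0 + measure Q X1 + measure Q X2"
    unfolding B using sX d1 sQ by (simp add: Q.finite_measure_Union)
  have dP: "measure P (L2 - L1) = measure P L2 - measure P L1"
    using P.finite_measure_Diff[of L2 L1] r1 r2 sP sub by auto
  have dQ: "measure Q (L2 - L1) = measure Q L2 - measure Q L1"
    using Q.finite_measure_Diff[of L2 L1] r1 r2 sQ sub by auto
  have cP: "measure P (- L2) = 1 - measure P L2"
    using P.prob_compl[of L2] r2 sP spP by (simp add: Compl_eq_Diff_UNIV)
  have cQ: "measure Q (- L2) = 1 - measure Q L2"
    using Q.prob_compl[of L2] r2 sQ spQ by (simp add: Compl_eq_Diff_UNIV)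
  show ?thesis unfolding mP mQ X0_def X1_def X2_def
    using r1 r2 dP dQ cP cQ by (auto simp: abs_le_iff)
qed



lemma util_meas:
  assumes "A \<subseteq> {0..<m}"
  shows "(\<lambda>t. util I p t A) \<in> borel_measurable (PiM {0..<m} (\<lambda>_. borel::real measure))"
proof -
  have fin: "finite {R. R \<subseteq> A \<and> R \<in> I}"
    using assms by (auto intro: finite_subset[of _ "Pow A"] finite_subset[of A "{0..<m}"])
  have "(\<lambda>t. Max ((\<lambda>R. sum t R) ` {R. R \<subseteq> A \<and> R \<in> I})) \<in> borel_measurable (PiM {0..<m} (\<lambda>_. borel::real measure))"
  proof -
    have h: "(\<lambda>t. sum t R) \<in> borel_measurable (PiM {0..<m} (\<lambda>_. borel::real measure))" if "R \<in> {R. R \<subseteq> A \<and> R \<in> I}" for R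
    proof -
    note that
    then have R: "R \<subseteq> {0..<m}" using assms by auto
    have hj: "(\<lambda>t. t j) \<in> borel_measurable (PiM {0..<m} (\<lambda>_. borel::real measure))" if "j \<in> R" for j
    proof -
      have "j \<in> {0..<m}" using R that by auto
      then show ?thesis
        using measurable_component_singleton[of j "{0..<m}" "\<lambda>_. borel"] by simp
    qed
    show "(\<lambda>t. sum t R) \<in> borel_measurable (PiM {0..<m} (\<lambda>_. borel::real measure))"
      using borel_measurable_sum[where f="\<lambda>j t. t j" and S=R, OF hj] by simp
    qed
    show ?thesis using borel_measurable_Max[OF fin h] by simp
  qed
  then show ?thesis unfolding util_def cadd_val_def by measurable
qed

lemma purchased_meas:
  assumes S_sub: "S \<subseteq> {0..<m}" and inj: "inj_on prio (Pow {0..<m})"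
  shows "purchased I prio S p \<delta> \<in> measurable (PiM {0..<m} (\<lambda>_. borel)) (count_space UNIV)"
proof -
  define M where "M = PiM {0..<m} (\<lambda>_. borel::real measure)"
  define u where "u = (\<lambda>A t. util I p t A)"
  define Mx where "Mx = (\<lambda>t. Max ((\<lambda>A. u A t) ` Pow S))"
  have finS: "finite S" using S_sub finite_subset by blast
  have finP: "finite (Pow S)" "Pow S \<noteq> {}" using finS by auto
  have um[measurable]: "u A \<in> borel_measurable M" if "A \<in> Pow S" for A
    unfolding u_def M_def using util_meas[of A m I p] that S_sub by auto
  have Mm[measurable]: "Mx \<in> borel_measurable M"
    unfolding Mx_def using borel_measurable_Max[OF finP(1) um] by simp
  define arg where "arg = (\<lambda>t. ARG_MIN prio A. A \<subseteq> S \<and> u A t = Mx t)"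
  have pur: "purchased I prio S p \<delta> t = (if \<delta> \<le> Mx t then arg t else {})" for t
    unfolding purchased_def arg_def Mx_def u_def Let_def
    by (simp add: image_def)
  have argP: "arg t \<subseteq> S \<and> u (arg t) t = Mx t \<and> (\<forall>B. B \<subseteq> S \<and> u B t = Mx t \<longrightarrow> prio (arg t) \<le> prio B)" for t
  proof -
    have "Mx t \<in> (\<lambda>A. u A t) ` Pow S" unfolding Mx_def using finP by simp
    then obtain A0 where "A0 \<subseteq> S" "u A0 t = Mx t" by auto
    then show ?thesis unfolding arg_def
      using arg_min_nat_lemma[of "\<lambda>A. A \<subseteq> S \<and> u A t = Mx t" A0 prio] by blast
  qed
  have arg_eq: "arg t = a \<longleftrightarrow> (a \<in> Pow S \<and> u a t = Mx t \<and> (\<forall>B\<in>Pow S. u B t = Mx t \<longrightarrow> prio a \<le> prio B))" for t a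
  proof
    assume "arg t = a" then show "a \<in> Pow S \<and> u a t = Mx t \<and> (\<forall>B\<in>Pow S. u B t = Mx t \<longrightarrow> prio a \<le> prio B)"
      using argP[of t] by auto
  next
    assume H: "a \<in> Pow S \<and> u a t = Mx t \<and> (\<forall>B\<in>Pow S. u B t = Mx t \<longrightarrow> prio a \<le> prio B)"
    have "prio a \<le> prio (arg t)" using H argP[of t] by auto
    moreover have "prio (arg t) \<le> prio a" using H argP[of t] by auto
    ultimately have "prio a = prio (arg t)" by simp
    moreover have "a \<in> Pow {0..<m}" "arg t \<in> Pow {0..<m}" using H argP[of t] S_sub by auto
    ultimately show "arg t = a" using inj by (metis inj_onD)
  qed
  have rng: "purchased I prio S p \<delta> t \<in> Pow S" for t
    unfolding pur using argP[of t] by auto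
  have pt: "purchased I prio S p \<delta> -` {a} \<inter> space M \<in> sets M" for a
  proof -
    have "purchased I prio S p \<delta> -` {a} \<inter> space M =
      {t \<in> space M. (\<delta> \<le> Mx t \<and> a \<in> Pow S \<and> u a t = Mx t \<and> (\<forall>B\<in>Pow S. u B t = Mx t \<longrightarrow> prio a \<le> prio B))
                     \<or> (\<not> \<delta> \<le> Mx t \<and> a = {})}"
    proof -
      have "(purchased I prio S p \<delta> t = a) \<longleftrightarrow> ((\<delta> \<le> Mx t \<and> a \<in> Pow S \<and> u a t = Mx t \<and> (\<forall>B\<in>Pow S. u B t = Mx t \<longrightarrow> prio a \<le> prio B))
                     \<or> (\<not> \<delta> \<le> Mx t \<and> a = {}))" for t
        unfolding pur using arg_eq[of t a] by (cases "\<delta> \<le> Mx t") auto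
      then show ?thesis by auto
    qed
    also have "\<dots> \<in> sets M"
    proof (cases "a \<in> Pow S")
      case True
      have a1: "{x\<in>space M. \<delta> \<le> Mx x} \<in> sets M"
        using borel_measurable_le[OF borel_measurable_const Mm] by simp
      have a2: "{x\<in>space M. u B x = Mx x} \<in> sets M" if "B \<in> Pow S" for B
        using borel_measurable_eq[OF um[OF that] Mm] .
      show ?thesis
        by (intro sets.sets_Collect_disj sets.sets_Collect_conj sets.sets_Collect_finite_All'
           sets.sets_Collect_imp sets.sets_Collect_neg sets.sets_Collect_const a1 a2 finP True)
    next
      case False
      then have "a \<noteq> {}" by auto
      with False show ?thesis by simp
    qed
    finally show ?thesis .
  qed
  show ?thesis unfolding M_def[symmetric]
  proof (rule measurableI)
    fix X :: "nat set set" assume "X \<in> sets (count_space UNIV)"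
    have "purchased I prio S p \<delta> -` X \<inter> space M = (\<Union>a\<in>X \<inter> Pow S. purchased I prio S p \<delta> -` {a} \<inter> space M)"
      using rng by auto
    also have "\<dots> \<in> sets M" using pt finP by (intro sets.finite_UN) auto
    finally show "purchased I prio S p \<delta> -` X \<inter> space M \<in> sets M" .
  qed simp
qed



lemma step_onesided:
  fixes M1 M2 :: "nat \<Rightarrow> real measure" and A :: "(nat \<Rightarrow> real) set"
  assumes P1: "\<And>i. prob_space (M1 i)" and P2: "\<And>i. prob_space (M2 i)"
    and s1: "\<And>i. sets (M1 i) = sets borel" and s2: "\<And>i. sets (M2 i) = sets borel"
    and eq: "\<And>i. i \<noteq> k \<Longrightarrow> M1 i = M2 i"
    and J: "finite J" "k \<in> J"
    and A: "A \<in> sets (PiM J (\<lambda>_. borel))"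
    and c: "0 \<le> c"
    and sec: "\<And>x. x \<in> space (PiM (J - {k}) M1) \<Longrightarrow>
        measure (M1 k) {y. x(k:=y) \<in> A} \<le> measure (M2 k) {y. x(k:=y) \<in> A} + c"
  shows "measure (PiM J M1) A \<le> measure (PiM J M2) A + c"
proof -
  define I where "I = J - {k}"
  have JI: "J = insert k I" "k \<notin> I" "finite I" using J unfolding I_def by auto
  interpret p1: product_sigma_finite M1
    unfolding product_sigma_finite_def using P1 by (simp add: prob_space_imp_sigma_finite)
  interpret p2: product_sigma_finite M2
    unfolding product_sigma_finite_def using P2 by (simp add: prob_space_imp_sigma_finite)
  interpret q1: prob_space "PiM J M1" using P1 by (intro prob_space_PiM)
  interpret q2: prob_space "PiM J M2" using P2 by (intro prob_space_PiM)
  have A1: "A \<in> sets (PiM J M1)" using A s1 sets_PiM_cong[of J J M1 "\<lambda>_. borel"] by simp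
  have A2: "A \<in> sets (PiM J M2)" using A s2 sets_PiM_cong[of J J M2 "\<lambda>_. borel"] by simp
  have PI: "PiM I M1 = PiM I M2" using JI eq by (intro PiM_cong) (auto, metis)
  have sp1: "space (M1 k) = UNIV" using sets_eq_imp_space_eq[OF s1[of k]] by simp
  have sp2: "space (M2 k) = UNIV" using sets_eq_imp_space_eq[OF s2[of k]] by simp
  interpret m1: prob_space "M1 k" by (rule P1)
  interpret m2: prob_space "M2 k" by (rule P2)
  have secm1: "{y. x(k:=y) \<in> A} \<in> sets (M1 k)" if "x \<in> space (PiM I M1)" for x
  proof -
    have "(\<lambda>v. x(k := v)) \<in> measurable (M1 k) (PiM (insert k I) M1)"
      by (rule measurable_component_update[OF that JI(2)])
    then have "(\<lambda>v. x(k := v)) -` A \<inter> space (M1 k) \<in> sets (M1 k)"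
      using A1 JI(1) by (intro measurable_sets) auto
    then show ?thesis using sp1 by (simp add: vimage_def)
  qed
  have secm2: "{y. x(k:=y) \<in> A} \<in> sets (M2 k)" if "x \<in> space (PiM I M1)" for x
    using secm1[OF that] s1[of k] s2[of k] by simp
  have pw: "(\<integral>\<^sup>+ y. indicator A (x(k:=y)) \<partial>M1 k) \<le> (\<integral>\<^sup>+ y. (indicator A (x(k:=y)) + ennreal c) \<partial>M2 k)"
    if x: "x \<in> space (PiM I M1)" for x
  proof -
    define Ax where "Ax = {y. x(k:=y) \<in> A}"
    have ind: "(\<lambda>y. indicator A (x(k:=y)) :: ennreal) = indicator Ax" unfolding Ax_def
      by (auto simp: indicator_def)
    have ind': "\<And>y. (indicator A (x(k:=y)) :: ennreal) = indicator Ax y" unfolding Ax_def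
      by (auto simp: indicator_def)
    have "(\<integral>\<^sup>+ y. indicator A (x(k:=y)) \<partial>M1 k) = emeasure (M1 k) Ax"
      unfolding ind using secm1[OF x] unfolding Ax_def by simp
    also have "\<dots> = ennreal (measure (M1 k) Ax)" by (simp add: m1.emeasure_eq_measure)
    also have "\<dots> \<le> ennreal (measure (M2 k) Ax + c)" using sec[of x] x unfolding Ax_def I_def
      by (simp add: ennreal_leI)
    also have "\<dots> = emeasure (M2 k) Ax + ennreal c" by (simp add: m2.emeasure_eq_measure c ennreal_plus)
    also have "\<dots> = (\<integral>\<^sup>+ y. (indicator A (x(k:=y)) + ennreal c) \<partial>M2 k)"
    proof -
      have "(\<integral>\<^sup>+ y. (indicator A (x(k:=y)) + ennreal c) \<partial>M2 k) =
            (\<integral>\<^sup>+ y. indicator Ax y \<partial>M2 k) + (\<integral>\<^sup>+ y. ennreal c \<partial>M2 k)"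
        unfolding ind' using secm2[OF x] unfolding Ax_def
        by (intro nn_integral_add) auto
      also have "\<dots> = emeasure (M2 k) Ax + ennreal c"
        using secm2[OF x] unfolding Ax_def by (simp add: m2.emeasure_space_1)
      finally show ?thesis by simp
    qed
    finally show ?thesis .
  qed
  have "ennreal (measure (PiM J M1) A) = emeasure (PiM J M1) A" by (simp add: q1.emeasure_eq_measure)
  also have "\<dots> = (\<integral>\<^sup>+ t. indicator A t \<partial>PiM J M1)" using A1 by simp
  also have "\<dots> = (\<integral>\<^sup>+ x. (\<integral>\<^sup>+ y. indicator A (x(k:=y)) \<partial>M1 k) \<partial>PiM I M1)"
    unfolding JI(1) using A1 JI by (intro p1.product_nn_integral_insert) auto
  also have "\<dots> \<le> (\<integral>\<^sup>+ x. (\<integral>\<^sup>+ y. (indicator A (x(k:=y)) + ennreal c) \<partial>M2 k) \<partial>PiM I M1)"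
    using pw by (intro nn_integral_mono) auto
  also have "\<dots> = (\<integral>\<^sup>+ x. (\<integral>\<^sup>+ y. (indicator A (x(k:=y)) + ennreal c) \<partial>M2 k) \<partial>PiM I M2)"
    unfolding PI ..
  also have "\<dots> = (\<integral>\<^sup>+ t. (indicator A t + ennreal c) \<partial>PiM J M2)"
    unfolding JI(1) using A2 JI by (intro p2.product_nn_integral_insert[symmetric]) auto
  also have "\<dots> = (\<integral>\<^sup>+ t. indicator A t \<partial>PiM J M2) + (\<integral>\<^sup>+ t. ennreal c \<partial>PiM J M2)"
    using A2 by (intro nn_integral_add) auto
  also have "\<dots> = emeasure (PiM J M2) A + ennreal c" using A2 by (simp add: q2.emeasure_space_1)
  also have "\<dots> = ennreal (measure (PiM J M2) A + c)" by (simp add: q2.emeasure_eq_measure c ennreal_plus)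
  finally have "ennreal (measure (PiM J M1) A) \<le> ennreal (measure (PiM J M2) A + c)" .
  moreover have "0 \<le> measure (PiM J M2) A + c" using c by simp
  ultimately show ?thesis using ennreal_le_iff by blast
qed



theorem mainTheorem19:
  fixes m :: nat
    and I :: "nat set set"
    and D Dh :: "nat \<Rightarrow> real measure"
    and \<xi> :: real
    and S :: "nat set"
    and p :: "nat \<Rightarrow> real"
    and \<delta> :: real
    and prio :: "nat set \<Rightarrow> nat"
  assumes I_sub: "I \<subseteq> Pow {0..<m}"
    and I_dc: "downward_closed I"
    and I_empty: "{} \<in> I"
    and D_prob: "\<And>j. j < m \<Longrightarrow> prob_space (D j)"
    and Dh_prob: "\<And>j. j < m \<Longrightarrow> prob_space (Dh j)"
    and D_borel: "\<And>j. j < m \<Longrightarrow> sets (D j) = sets borel"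
    and Dh_borel: "\<And>j. j < m \<Longrightarrow> sets (Dh j) = sets borel"
    and D_nonneg: "\<And>j. j < m \<Longrightarrow> AE x in D j. 0 \<le> x"
    and Dh_nonneg: "\<And>j. j < m \<Longrightarrow> AE x in Dh j. 0 \<le> x"
    and close: "\<And>j. j < m \<Longrightarrow> kolmogorov_dist (D j) (Dh j) \<le> \<xi>"
    and S_sub: "S \<subseteq> {0..<m}"
    and rank_inj: "inj_on prio (Pow {0..<m})"
  shows "tv_dist
           (distr (PiM {0..<m} D) (count_space UNIV) (purchased I prio S p \<delta>))
           (distr (PiM {0..<m} Dh) (count_space UNIV) (purchased I prio S p \<delta>))
         \<le> 2 * real m * \<xi>"
proof -
  define f where "f = purchased I prio S p \<delta>"
  define J where "J = {0..<m}"
  define B where "B = PiM J (\<lambda>_. borel::real measure)"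
  define D' where "D' = (\<lambda>i. if i < m then D i else return borel (0::real))"
  define Dh' where "Dh' = (\<lambda>i. if i < m then Dh i else return borel (0::real))"
  define N where "N = (\<lambda>k i. if i < k then Dh' i else D' i)"
  have finS: "finite S" using S_sub finite_subset by blast
  have injS: "inj_on prio (Pow S)" using S_sub by (intro inj_on_subset[OF rank_inj]) auto
  have NP: "prob_space (N k i)" for k i
    unfolding N_def D'_def Dh'_def using D_prob Dh_prob by (auto intro: prob_space_return)
  have Ns: "sets (N k i) = sets borel" for k i
    unfolding N_def D'_def Dh'_def using D_borel Dh_borel by auto
  have Nsp: "space (N k i) = UNIV" for k i using sets_eq_imp_space_eq[OF Ns[of k i]] by simp
  have fm: "f \<in> measurable B (count_space UNIV)"
    unfolding f_def B_def J_def using purchased_meas[OF S_sub rank_inj] .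
  have spB: "space B = PiE J (\<lambda>_. UNIV)" unfolding B_def by (simp add: space_PiM)
  have kol: "\<bar>measure (D j) {..a} - measure (Dh j) {..a}\<bar> \<le> \<xi>" if j: "j < m" for j a
  proof -
    interpret P: prob_space "D j" using D_prob[OF j] .
    interpret Q: prob_space "Dh j" using Dh_prob[OF j] .
    have bdd: "bdd_above (range (\<lambda>x. \<bar>measure (D j) {..x} - measure (Dh j) {..x}\<bar>))"
    proof (rule bdd_aboveI2)
      fix x
      have "measure (D j) {..x} \<le> 1" "measure (Dh j) {..x} \<le> 1" by auto
      moreover have "0 \<le> measure (D j) {..x}" "0 \<le> measure (Dh j) {..x}" by auto
      ultimately show "\<bar>measure (D j) {..x} - measure (Dh j) {..x}\<bar> \<le> 1" unfolding abs_le_iff by linarith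
    qed
    have "\<bar>measure (D j) {..a} - measure (Dh j) {..a}\<bar> \<le> kolmogorov_dist (D j) (Dh j)"
      unfolding kolmogorov_dist_def by (rule cSUP_upper[OF _ bdd]) simp
    then show ?thesis using close[OF j] by linarith
  qed
  have main: "\<bar>measure (PiM J (N 0)) A - measure (PiM J (N n)) A\<bar> \<le> 2 * real n * \<xi>"
    if A: "A = f -` E \<inter> space B" and n: "n \<le> m" for A E n
  proof -
    have AB: "A \<in> sets B" unfolding A using fm by (rule measurable_sets) simp
    have AB': "A \<in> sets (PiM J (\<lambda>_. borel))" using AB unfolding B_def .
    have sec: "{y. x(k:=y) \<in> A} = (\<lambda>y. f (x(k:=y))) -` E" if x: "x \<in> space (PiM (J - {k}) (N q))" and k: "k \<in> J" for x k q
    proof -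
      have "x(k:=y) \<in> space B" for y
        using x k unfolding spB by (auto simp: space_PiM Nsp PiE_def extensional_def)
      then show ?thesis unfolding A by auto
    qed
    have stepb: "\<bar>measure (PiM J (N k)) A - measure (PiM J (N (Suc k))) A\<bar> \<le> 2 * \<xi>" if k: "k < m" for k
    proof -
      have kJ: "k \<in> J" using k unfolding J_def by simp
      have xi: "0 \<le> 2 * \<xi>" using kol[OF k, of 0] by linarith
      have eqN: "N k i = N (Suc k) i" if "i \<noteq> k" for i using that unfolding N_def by auto
      have Nk: "N k k = D k" "N (Suc k) k = Dh k" unfolding N_def D'_def Dh'_def using k by auto
      have pb: "\<bar>measure (D k) {y. x(k:=y) \<in> A} - measure (Dh k) {y. x(k:=y) \<in> A}\<bar> \<le> 2 * \<xi>"
        if x: "x \<in> space (PiM (J - {k}) (N q))" for x q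
      proof -
        obtain L1 L2 z0 z1 z2 where st: "downset L1" "downset L2" "L1 \<subseteq> L2"
          "\<forall>y\<in>L1. f (x(k:=y)) = z0" "\<forall>y\<in>L2 - L1. f (x(k:=y)) = z1" "\<forall>y. y \<notin> L2 \<longrightarrow> f (x(k:=y)) = z2"
          using phi_struct[OF finS I_empty injS, of p \<delta> x k] unfolding f_def by blast
        show ?thesis unfolding sec[OF x kJ]
          by (rule piece_bound[OF D_prob[OF k] Dh_prob[OF k] D_borel[OF k] Dh_borel[OF k] kol[OF k] st])
      qed
      have "measure (PiM J (N k)) A \<le> measure (PiM J (N (Suc k))) A + 2 * \<xi>"
      proof (rule step_onesided[OF NP NP Ns Ns eqN _ kJ AB' xi])
        show "finite J" unfolding J_def by simp
        fix x assume "x \<in> space (PiM (J - {k}) (N k))"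
        then show "measure (N k k) {y. x(k:=y) \<in> A} \<le> measure (N (Suc k) k) {y. x(k:=y) \<in> A} + 2 * \<xi>"
          using pb[of x k] unfolding Nk by linarith
      qed
      moreover have "measure (PiM J (N (Suc k))) A \<le> measure (PiM J (N k)) A + 2 * \<xi>"
      proof (rule step_onesided[OF NP NP Ns Ns eqN[symmetric] _ kJ AB' xi])
        show "finite J" unfolding J_def by simp
        fix x assume "x \<in> space (PiM (J - {k}) (N (Suc k)))"
        then show "measure (N (Suc k) k) {y. x(k:=y) \<in> A} \<le> measure (N k k) {y. x(k:=y) \<in> A} + 2 * \<xi>"
          using pb[of x "Suc k"] unfolding Nk by linarith
      qed
      ultimately show ?thesis by linarith
    qed
    show ?thesis using n
    proof (induction n)
      case 0 then show ?case by simp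
    next
      case (Suc n)
      then have "\<bar>measure (PiM J (N 0)) A - measure (PiM J (N n)) A\<bar> \<le> 2 * real n * \<xi>" by simp
      moreover have "\<bar>measure (PiM J (N n)) A - measure (PiM J (N (Suc n))) A\<bar> \<le> 2 * \<xi>"
        using stepb Suc.prems by simp
      ultimately show ?case by (simp add: algebra_simps)
    qed
  qed
  have PD: "PiM {0..<m} D = PiM J (N 0)" unfolding J_def N_def D'_def by (intro PiM_cong) auto
  have PDh: "PiM {0..<m} Dh = PiM J (N m)" unfolding J_def N_def Dh'_def by (intro PiM_cong) auto
  have sN: "sets (PiM J (N q)) = sets B" for q unfolding B_def by (intro sets_PiM_cong) (auto simp: Ns)
  have spN: "space (PiM J (N q)) = space B" for q using sets_eq_imp_space_eq[OF sN] .
  have fmN: "f \<in> measurable (PiM J (N q)) (count_space UNIV)" for q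
    using fm measurable_cong_sets[OF sN[symmetric] refl] by blast
  show ?thesis
    unfolding tv_dist_def f_def[symmetric] PD PDh
  proof (rule cSUP_least)
    show "sets (distr (PiM J (N 0)) (count_space UNIV) f) \<noteq> {}" by auto
    fix E assume E: "E \<in> sets (distr (PiM J (N 0)) (count_space UNIV) f)"
    have "measure (distr (PiM J (N 0)) (count_space UNIV) f) E = measure (PiM J (N 0)) (f -` E \<inter> space B)"
      using measure_distr[OF fmN[of 0], of E] spN by simp
    moreover have "measure (distr (PiM J (N m)) (count_space UNIV) f) E = measure (PiM J (N m)) (f -` E \<inter> space B)"
      using measure_distr[OF fmN[of m], of E] spN by simp
    ultimately show "\<bar>measure (distr (PiM J (N 0)) (count_space UNIV) f) E - measure (distr (PiM J (N m)) (count_space UNIV) f) E\<bar>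
         \<le> 2 * real m * \<xi>"
      using main[where E=E and n=m, OF refl] by simp
  qed
qed


end
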